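(* Let $A=(A_1,A_2,A_3)\in V_3$ satisfy $\sigma_{12}(A)=\sigma_{13}(A)=\sigma_{23}(A)=0$ and suppose $A$ is not similar to an upper triangular $3$-matrix. Then $A$ is similar to a triple of the form $A_1'=\begin{pmatrix}a_1&0\\0&d_1\end{pmatrix}$, $A_2'=\begin{pmatrix}a_2&b_2\\0&d_2\end{pmatrix}$, $A_3'=\begin{pmatrix}a_3&0\\c_3&d_3\end{pmatrix}$ with $e_2e_3+b_2c_3=0$ and $e_1b_2c_3\neq 0$, where $e_j=a_j-d_j$.
   Context: $V_3=(M_{2\times2}(\mathbb{C}))^{\times 3}$ with $GL(2,\mathbb{C})$ acting by simultaneous conjugation; two elements are similar if they lie in the same orbit. A $3$-matrix is upper triangular if all components are upper triangular. With $t_j=\mathsf{tr}(A_j)$, $t_{jk}=\mathsf{tr}(A_jA_k)$, define $\tau_{jk}=t_{jk}-\tfrac12t_jt_k$ and $\sigma_{jk}=\tau_{jk}^2-\tau_{jj}\tau_{kk}$. *)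

theory Defs
  imports "HOL-Analysis.Analysis"
begin

type_synonym cmat2 = "complex^2^2"

definition mat2 :: "complex \<Rightarrow> complex \<Rightarrow> complex \<Rightarrow> complex \<Rightarrow> cmat2" where
  "mat2 a b c d = (\<chi> i j. if i = 1 then (if j = 1 then a else b) else (if j = 1 then c else d))"

definition tau :: "cmat2 \<Rightarrow> cmat2 \<Rightarrow> complex" where
  "tau X Y = trace (X ** Y) - trace X * trace Y / 2"

definition sigma :: "cmat2 \<Rightarrow> cmat2 \<Rightarrow> complex" where
  "sigma X Y = (tau X Y)^2 - tau X X * tau Y Y"

definition similar3 :: "cmat2 \<times> cmat2 \<times> cmat2 \<Rightarrow> cmat2 \<times> cmat2 \<times> cmat2 \<Rightarrow> bool" where
  "similar3 A B \<longleftrightarrow> (\<exists>P :: cmat2. invertible P \<and>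
      fst B = P ** fst A ** matrix_inv P \<and>
      fst (snd B) = P ** fst (snd A) ** matrix_inv P \<and>
      snd (snd B) = P ** snd (snd A) ** matrix_inv P)"

definition upper_tri :: "cmat2 \<Rightarrow> bool" where
  "upper_tri X \<longleftrightarrow> X $ 2 $ 1 = 0"

definition upper_tri3 :: "cmat2 \<times> cmat2 \<times> cmat2 \<Rightarrow> bool" where
  "upper_tri3 A \<longleftrightarrow> upper_tri (fst A) \<and> upper_tri (fst (snd A)) \<and> upper_tri (snd (snd A))"

end

theory Submission
  imports Defs
begin

lemma cmat2_eq: "(X::cmat2) = mat2 (X$1$1) (X$1$2) (X$2$1) (X$2$2)"
  unfolding mat2_def by (simp add: vec_eq_iff forall_2)

lemma mat2_nth [simp]:
  "mat2 a b c d $ 1 $ 1 = a" "mat2 a b c d $ 1 $ 2 = b"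
  "mat2 a b c d $ 2 $ 1 = c" "mat2 a b c d $ 2 $ 2 = d"
  unfolding mat2_def by simp_all

lemma mat2_eq_iff: "mat2 a b c d = mat2 a' b' c' d' \<longleftrightarrow> a = a' \<and> b = b' \<and> c = c' \<and> d = d'"
  by (metis mat2_nth)

lemma mat2_mult: "mat2 a b c d ** mat2 a' b' c' d' =
   mat2 (a*a' + b*c') (a*b' + b*d') (c*a' + d*c') (c*b' + d*d')"
  by (simp add: vec_eq_iff forall_2 matrix_matrix_mult_def sum_2 mat2_def)

lemma mat1_mat2: "(mat 1 :: cmat2) = mat2 1 0 0 1"
  by (simp add: vec_eq_iff forall_2 mat_def mat2_def)

lemma trace_mat2: "trace (mat2 a b c d) = a + d"
  by (simp add: trace_def sum_2)

lemma inv_props: "invertible (P::cmat2) \<Longrightarrow> P ** matrix_inv P = mat 1 \<and> matrix_inv P ** P = mat 1"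
  unfolding invertible_def matrix_inv_def by (rule someI_ex)

lemma matrix_inv_mat2:
  assumes "a*d - b*c \<noteq> 0"
  shows "invertible (mat2 a b c d)"
    "matrix_inv (mat2 a b c d) = mat2 (d*inverse(a*d-b*c)) (-b*inverse(a*d-b*c)) (-c*inverse(a*d-b*c)) (a*inverse(a*d-b*c))"
proof -
  define k where "k = inverse(a*d-b*c)"
  have k1: "(a*d-b*c)*k = 1" unfolding k_def using assms by simp
  let ?Q = "mat2 (d*k) (-b*k) (-c*k) (a*k)"
  have 1: "mat2 a b c d ** ?Q = mat 1"
    unfolding mat2_mult mat1_mat2 mat2_eq_iff using k1 by (simp add: algebra_simps)
  have 2: "?Q ** mat2 a b c d = mat 1"
    unfolding mat2_mult mat1_mat2 mat2_eq_iff using k1 by (simp add: algebra_simps)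
  show inv: "invertible (mat2 a b c d)" unfolding invertible_def using 1 2 by blast
  have "matrix_inv (mat2 a b c d) = matrix_inv (mat2 a b c d) ** (mat2 a b c d ** ?Q)"
    using 1 by simp
  also have "\<dots> = ?Q" using inv_props[OF inv] by (simp add: matrix_mul_assoc)
  finally show "matrix_inv (mat2 a b c d) = mat2 (d*inverse(a*d-b*c)) (-b*inverse(a*d-b*c)) (-c*inverse(a*d-b*c)) (a*inverse(a*d-b*c))" unfolding k_def .
qed

lemma tau_inv: assumes "invertible P"
  shows "tau (P ** X ** matrix_inv P) (P ** Y ** matrix_inv P) = tau X Y"
proof -
  have i: "matrix_inv P ** P = mat 1" using inv_props[OF assms] by simp
  have t: "trace (P ** Z ** matrix_inv P) = trace Z" for Z :: cmat2
    by (metis i matrix_mul_assoc matrix_mul_rid trace_mul_sym)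
  have "P ** X ** matrix_inv P ** (P ** Y ** matrix_inv P) = P ** (X ** Y) ** matrix_inv P"
    by (metis i matrix_mul_assoc matrix_mul_rid)
  then show ?thesis unfolding tau_def using t by simp
qed

lemma sigma_inv: "invertible P \<Longrightarrow> sigma (P ** X ** matrix_inv P) (P ** Y ** matrix_inv P) = sigma X Y"
  unfolding sigma_def by (simp add: tau_inv)

lemma similar3_trans: assumes "similar3 A B" "similar3 B C" shows "similar3 A C"
proof -
  obtain P where P: "invertible P" "fst B = P ** fst A ** matrix_inv P"
     "fst (snd B) = P ** fst (snd A) ** matrix_inv P" "snd (snd B) = P ** snd (snd A) ** matrix_inv P"
    using assms(1) unfolding similar3_def by blast
  obtain Q where Q: "invertible Q" "fst C = Q ** fst B ** matrix_inv Q"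
     "fst (snd C) = Q ** fst (snd B) ** matrix_inv Q" "snd (snd C) = Q ** snd (snd B) ** matrix_inv Q"
    using assms(2) unfolding similar3_def by blast
  have iP: "P ** matrix_inv P = mat 1" "matrix_inv P ** P = mat 1" using inv_props[OF P(1)] by auto
  have iQ: "Q ** matrix_inv Q = mat 1" "matrix_inv Q ** Q = mat 1" using inv_props[OF Q(1)] by auto
  let ?R = "matrix_inv P ** matrix_inv Q"
  have r1: "(Q ** P) ** ?R = mat 1"
    by (metis iP(1) iQ(1) matrix_mul_assoc matrix_mul_rid)
  have r2: "?R ** (Q ** P) = mat 1"
    by (metis iP(2) iQ(2) matrix_mul_assoc matrix_mul_rid)
  have inv: "invertible (Q ** P)" unfolding invertible_def using r1 r2 by blast
  have mi: "matrix_inv (Q ** P) = ?R"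
  proof -
    have "matrix_inv (Q ** P) = matrix_inv (Q ** P) ** ((Q ** P) ** ?R)" using r1 by simp
    also have "\<dots> = ?R" using inv_props[OF inv] by (simp add: matrix_mul_assoc)
    finally show ?thesis .
  qed
  have e: "Q ** (P ** Z ** matrix_inv P) ** matrix_inv Q = (Q ** P) ** Z ** matrix_inv (Q ** P)" for Z :: cmat2
    unfolding mi by (simp add: matrix_mul_assoc)
  show ?thesis unfolding similar3_def using inv P Q e by metis
qed


lemma conj_mat2:
  assumes "a*d-b*c \<noteq> 0"
  shows "mat2 a b c d ** mat2 p q r s ** matrix_inv (mat2 a b c d) =
    mat2 (((a*p+b*r)*d - (a*q+b* s)*c)*inverse(a*d-b*c)) ((-(a*p+b*r)*b + (a*q+b* s)*a)*inverse(a*d-b*c))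
         (((c*p+d*r)*d - (c*q+d* s)*c)*inverse(a*d-b*c)) ((-(c*p+d*r)*b + (c*q+d* s)*a)*inverse(a*d-b*c))"
  unfolding matrix_inv_mat2(2)[OF assms] mat2_mult mat2_eq_iff by (simp add: algebra_simps)

definition ff :: "cmat2 \<Rightarrow> complex \<Rightarrow> complex \<Rightarrow> complex" where
  "ff X c d = c*d*(X$1$1 - X$2$2) + d^2*X$2$1 - c^2*X$1$2"

lemma entry21:
  assumes "a*d-b*c \<noteq> 0"
  shows "(mat2 a b c d ** X ** matrix_inv (mat2 a b c d))$2$1 = ff X c d * inverse(a*d-b*c)"
  apply (subst cmat2_eq[of X])
  unfolding conj_mat2[OF assms] ff_def by (simp add: algebra_simps power2_eq_square)

lemma nonzero_row: "(c,d) \<noteq> (0,0) \<Longrightarrow> \<exists>a b::complex. a*d - b*c \<noteq> 0"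
proof (cases "d = 0")
  case True
  assume "(c,d) \<noteq> (0,0)"
  then show ?thesis using True by (intro exI[of _ 0] exI[of _ 1]) auto
next
  case False
  then show ?thesis by (intro exI[of _ 1] exI[of _ 0]) auto
qed

abbreviation NU :: "cmat2 \<Rightarrow> cmat2 \<Rightarrow> cmat2 \<Rightarrow> bool" where
  "NU A1 A2 A3 \<equiv> \<not> (\<exists>B. similar3 (A1, A2, A3) B \<and> upper_tri3 B)"

lemma LH:
  assumes "NU A1 A2 A3" "(c,d) \<noteq> (0,0)" "ff A1 c d = 0" "ff A2 c d = 0" "ff A3 c d = 0"
  shows False
proof -
  obtain a b where D: "a*d - b*c \<noteq> 0" using nonzero_row[OF assms(2)] by blast
  let ?P = "mat2 a b c d"
  have "similar3 (A1,A2,A3) (?P ** A1 ** matrix_inv ?P, ?P ** A2 ** matrix_inv ?P, ?P ** A3 ** matrix_inv ?P)"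
    unfolding similar3_def using matrix_inv_mat2(1)[OF D] by auto
  moreover have "upper_tri3 (?P ** A1 ** matrix_inv ?P, ?P ** A2 ** matrix_inv ?P, ?P ** A3 ** matrix_inv ?P)"
    unfolding upper_tri3_def upper_tri_def using entry21[OF D] assms by simp
  ultimately show False using assms(1) by blast
qed

lemma quad_zero: "\<exists>c d::complex. (c,d) \<noteq> (0,0) \<and> c*d*e + d^2*r - c^2*q = 0"
proof (cases "q = 0")
  case True then show ?thesis by (intro exI[of _ 1] exI[of _ 0]) simp
next
  case False
  define w where "w = csqrt (e^2 + 4*q*r)"
  have w: "w^2 = e^2 + 4*q*r" unfolding w_def by simp
  define c where "c = (e + w)/(2*q)"
  have "c*1*e + 1^2*r - c^2*q = 0" unfolding c_def using False w
    by (simp add: field_simps power2_eq_square)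
  then show ?thesis by (intro exI[of _ c] exI[of _ 1]) simp
qed

lemma quad_zero_ff: "\<exists>c d. (c,d) \<noteq> (0,0) \<and> ff X c d = 0"
  unfolding ff_def using quad_zero[of "X$1$1 - X$2$2" "X$2$1" "X$1$2"] by (auto simp: algebra_simps)

lemma transfer:
  assumes "invertible P" "NU A1 A2 A3"
  shows "NU (P ** A1 ** matrix_inv P) (P ** A2 ** matrix_inv P) (P ** A3 ** matrix_inv P)"
    "similar3 (A1,A2,A3) (P ** A1 ** matrix_inv P, P ** A2 ** matrix_inv P, P ** A3 ** matrix_inv P)"
proof -
  show s: "similar3 (A1,A2,A3) (P ** A1 ** matrix_inv P, P ** A2 ** matrix_inv P, P ** A3 ** matrix_inv P)"
    unfolding similar3_def using assms(1) by auto
  show "NU (P ** A1 ** matrix_inv P) (P ** A2 ** matrix_inv P) (P ** A3 ** matrix_inv P)"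
    using similar3_trans[OF s] assms(2) by blast
qed

lemma sigma_mat2: "sigma (mat2 p q r s) (mat2 p' q' r' s') =
  (p*p' + q*r' + r*q' + s* s' - (p+s)*(p'+s')/2)^2 - (p*p + q*r + r*q + s* s - (p+s)*(p+s)/2) * (p'*p' + q'*r' + r'*q' + s'* s' - (p'+s')*(p'+s')/2)"
  unfolding sigma_def tau_def by (simp add: mat2_mult trace_mat2 ac_simps)

lemma scalar_upper:
  assumes "NU (mat2 p 0 0 p) (mat2 p2 q2 0 s2) A3" "sigma (mat2 p2 q2 0 s2) A3 = 0"
  shows False
proof -
  obtain p3 q3 r3 s3 where A3: "A3 = mat2 p3 q3 r3 s3" using cmat2_eq by blast
  have sg: "r3 * ((p2-s2)*(p3-s3)*q2 + q2^2*r3 - (p2-s2)^2*q3) = 0"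
  proof -
    have "sigma (mat2 p2 q2 0 s2) (mat2 p3 q3 r3 s3) = r3 * ((p2-s2)*(p3-s3)*q2 + q2^2*r3 - (p2-s2)^2*q3)"
      unfolding sigma_mat2 by algebra
    then show ?thesis using assms(2) A3 by simp
  qed
  show False
  proof (cases "r3 = 0")
    case True
    show False by (rule LH[OF assms(1), of 0 1]) (simp_all add: ff_def A3 True)
  next
    case False
    with sg have K: "(p2-s2)*(p3-s3)*q2 + q2^2*r3 - (p2-s2)^2*q3 = 0" by simp
    show False
    proof (cases "(p2 - s2, q2) = (0,0)")
      case False
      show False by (rule LH[OF assms(1) False]) (use K in \<open>simp_all add: ff_def A3 algebra_simps power2_eq_square\<close>)
    next
      case True
      obtain c d where cd: "(c,d) \<noteq> (0,0)" "ff A3 c d = 0" using quad_zero_ff by blast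
      show False by (rule LH[OF assms(1) cd(1)]) (use True cd(2) in \<open>simp_all add: ff_def\<close>)
    qed
  qed
qed



abbreviation GOAL :: "cmat2 \<Rightarrow> cmat2 \<Rightarrow> cmat2 \<Rightarrow> bool" where
  "GOAL A1 A2 A3 \<equiv> \<exists>a1 d1 a2 b2 d2 a3 c3 d3 :: complex.
           similar3 (A1, A2, A3) (mat2 a1 0 0 d1, mat2 a2 b2 0 d2, mat2 a3 0 c3 d3) \<and>
           (a2 - d2) * (a3 - d3) + b2 * c3 = 0 \<and>
           (a1 - d1) * b2 * c3 \<noteq> 0"

lemma ff_mat2: "ff (mat2 p q r s) c d = c*d*(p - s) + d^2*r - c^2*q"
  unfolding ff_def by simp

lemma main_diag:
  assumes NU: "NU (mat2 p 0 0 s) A2 A3" and ps: "p \<noteq> s"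
    and s12: "sigma (mat2 p 0 0 s) A2 = 0" and s13: "sigma (mat2 p 0 0 s) A3 = 0"
    and s23: "sigma A2 A3 = 0"
  shows "GOAL (mat2 p 0 0 s) A2 A3"
proof -
  obtain p2 q2 r2 s2 where A2: "A2 = mat2 p2 q2 r2 s2" using cmat2_eq by blast
  obtain p3 q3 r3 s3 where A3: "A3 = mat2 p3 q3 r3 s3" using cmat2_eq by blast
  have ps2: "(p-s)^2 \<noteq> 0" using ps by simp
  have "sigma (mat2 p 0 0 s) (mat2 p2 q2 r2 s2) = -((p-s)^2*(q2*r2))" unfolding sigma_mat2 by algebra
  then have qr2: "q2*r2 = 0" using s12 A2 ps2 by simp
  have "sigma (mat2 p 0 0 s) (mat2 p3 q3 r3 s3) = -((p-s)^2*(q3*r3))" unfolding sigma_mat2 by algebra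
  then have qr3: "q3*r3 = 0" using s13 A3 ps2 by simp
  have h01: "r2 \<noteq> 0 \<or> r3 \<noteq> 0"
  proof (rule ccontr)
    assume "\<not> ?thesis"
    then show False by (intro LH[OF NU, of 0 1]) (auto simp: ff_mat2 A2 A3)
  qed
  have h10: "q2 \<noteq> 0 \<or> q3 \<noteq> 0"
  proof (rule ccontr)
    assume "\<not> ?thesis"
    then show False by (intro LH[OF NU, of 1 0]) (auto simp: ff_mat2 A2 A3)
  qed
  show ?thesis
  proof (cases "r3 = 0")
    case False
    then have q3: "q3 = 0" using qr3 by simp
    then have q2: "q2 \<noteq> 0" using h10 by simp
    then have r2: "r2 = 0" using qr2 by simp
    have "sigma (mat2 p2 q2 0 s2) (mat2 p3 0 r3 s3) = q2*r3*((p2-s2)*(p3-s3) + q2*r3)" unfolding sigma_mat2 by algebra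
    then have eq: "(p2-s2)*(p3-s3) + q2*r3 = 0" using s23 A2 A3 q3 r2 q2 False by simp
    have D: "1*1 - 0*0 \<noteq> (0::complex)" by simp
    have sim: "similar3 (mat2 p 0 0 s, A2, A3) (mat2 p 0 0 s, mat2 p2 q2 0 s2, mat2 p3 0 r3 s3)"
      unfolding similar3_def
      apply (rule exI[of _ "mat2 1 0 0 1"])
      apply (simp add: conj_mat2[OF D] matrix_inv_mat2(1)[OF D] A2 A3 q3 r2)
      done
    have nz: "(p - s) * q2 * r3 \<noteq> 0" using ps q2 False by simp
    show ?thesis using sim eq nz by blast
  next
    case True
    then have r2: "r2 \<noteq> 0" using h01 by simp
    then have q2: "q2 = 0" using qr2 by simp
    then have q3: "q3 \<noteq> 0" using h10 by simp
    have "sigma (mat2 p2 0 r2 s2) (mat2 p3 q3 0 s3) = r2*q3*((s2-p2)*(s3-p3) + r2*q3)" unfolding sigma_mat2 by algebra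
    then have eq: "(s2-p2)*(s3-p3) + r2*q3 = 0" using s23 A2 A3 q3 r2 q2 True by simp
    have D: "0*0 - 1*1 \<noteq> (0::complex)" by simp
    have sim: "similar3 (mat2 p 0 0 s, A2, A3) (mat2 s 0 0 p, mat2 s2 r2 0 p2, mat2 s3 0 q3 p3)"
      unfolding similar3_def
      apply (rule exI[of _ "mat2 0 1 1 0"])
      apply (simp add: conj_mat2[OF D] matrix_inv_mat2(1)[OF D] A2 A3 q2 True)
      done
    have nz: "(s - p) * r2 * q3 \<noteq> 0" using ps r2 q3 by simp
    show ?thesis using sim eq nz by blast
  qed
qed


lemma upper_form:
  assumes "a*d-b*c \<noteq> 0" "ff X c d = 0"
  shows "\<exists>x y z. mat2 a b c d ** X ** matrix_inv (mat2 a b c d) = mat2 x y 0 z"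
proof -
  have "(mat2 a b c d ** X ** matrix_inv (mat2 a b c d))$2$1 = 0" using entry21[OF assms(1)] assms(2) by simp
  then show ?thesis by (metis cmat2_eq)
qed

lemma conj_scalar:
  assumes "a*d-b*c \<noteq> 0"
  shows "mat2 a b c d ** mat2 p 0 0 p ** matrix_inv (mat2 a b c d) = mat2 p 0 0 p"
proof -
  have k: "(a*d-b*c) * inverse (a*d-b*c) = 1" using assms by simp
  show ?thesis unfolding conj_mat2[OF assms] mat2_eq_iff
    apply (intro conjI)
    using k by algebra+
qed

lemma scalar_case:
  assumes NU: "NU (mat2 p 0 0 p) A2 A3" and s23: "sigma A2 A3 = 0"
  shows False
proof -
  obtain c d where cd: "(c,d) \<noteq> (0,0)" "ff A2 c d = 0" using quad_zero_ff by blast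
  obtain a b where D: "a*d - b*c \<noteq> 0" using nonzero_row[OF cd(1)] by blast
  let ?P = "mat2 a b c d"
  have inv: "invertible ?P" using matrix_inv_mat2(1)[OF D] .
  obtain x y z where A2': "?P ** A2 ** matrix_inv ?P = mat2 x y 0 z" using upper_form[OF D cd(2)] by blast
  have NU': "NU (mat2 p 0 0 p) (mat2 x y 0 z) (?P ** A3 ** matrix_inv ?P)"
    using transfer(1)[OF inv NU] A2' conj_scalar[OF D] by simp
  have "sigma (mat2 x y 0 z) (?P ** A3 ** matrix_inv ?P) = 0"
    using sigma_inv[OF inv, of A2 A3] A2' s23 by simp
  then show False using scalar_upper[OF NU'] by blast
qed

lemma main_upper:
  assumes NU: "NU (mat2 p q 0 s) A2 A3"
    and s12: "sigma (mat2 p q 0 s) A2 = 0" and s13: "sigma (mat2 p q 0 s) A3 = 0"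
    and s23: "sigma A2 A3 = 0"
  shows "GOAL (mat2 p q 0 s) A2 A3"
proof (cases "p = s")
  case ps: True
  show ?thesis
  proof (cases "q = 0")
    case True
    then show ?thesis using scalar_case[of p A2 A3] NU s23 ps by simp
  next
    case False
    obtain p2 q2 r2 s2 where A2: "A2 = mat2 p2 q2 r2 s2" using cmat2_eq by blast
    obtain p3 q3 r3 s3 where A3: "A3 = mat2 p3 q3 r3 s3" using cmat2_eq by blast
    have "sigma (mat2 p q 0 p) (mat2 p2 q2 r2 s2) = (q*r2)^2" unfolding sigma_mat2 by algebra
    then have r2: "r2 = 0" using s12 A2 ps False by simp
    have "sigma (mat2 p q 0 p) (mat2 p3 q3 r3 s3) = (q*r3)^2" unfolding sigma_mat2 by algebra
    then have r3: "r3 = 0" using s13 A3 ps False by simp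
    have False by (rule LH[OF NU, of 0 1]) (simp_all add: ff_mat2 A2 A3 r2 r3)
    then show ?thesis ..
  qed
next
  case False
  define t where "t = q/(p-s)"
  have D: "1*1 - t*0 \<noteq> (0::complex)" by simp
  let ?P = "mat2 1 t 0 1"
  have inv: "invertible ?P" using matrix_inv_mat2(1)[OF D] .
  have A1': "?P ** mat2 p q 0 s ** matrix_inv ?P = mat2 p 0 0 s"
    apply (subst conj_mat2[OF D])
    unfolding mat2_eq_iff t_def using False by (simp add: field_simps)
  have NU': "NU (mat2 p 0 0 s) (?P ** A2 ** matrix_inv ?P) (?P ** A3 ** matrix_inv ?P)"
    using transfer(1)[OF inv NU] A1' by simp
  have sim: "similar3 (mat2 p q 0 s, A2, A3) (mat2 p 0 0 s, ?P ** A2 ** matrix_inv ?P, ?P ** A3 ** matrix_inv ?P)"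
    using transfer(2)[OF inv NU] A1' by simp
  have "GOAL (mat2 p 0 0 s) (?P ** A2 ** matrix_inv ?P) (?P ** A3 ** matrix_inv ?P)"
  proof (rule main_diag[OF NU' False])
    show "sigma (mat2 p 0 0 s) (?P ** A2 ** matrix_inv ?P) = 0"
      using sigma_inv[OF inv, of "mat2 p q 0 s" A2] A1' s12 by simp
    show "sigma (mat2 p 0 0 s) (?P ** A3 ** matrix_inv ?P) = 0"
      using sigma_inv[OF inv, of "mat2 p q 0 s" A3] A1' s13 by simp
    show "sigma (?P ** A2 ** matrix_inv ?P) (?P ** A3 ** matrix_inv ?P) = 0"
      using sigma_inv[OF inv, of A2 A3] s23 by simp
  qed
  then show ?thesis using similar3_trans[OF sim] by blast
qed

theorem lemma2p10:
  fixes A1 A2 A3 :: cmat2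
  assumes "sigma A1 A2 = 0" and "sigma A1 A3 = 0" and "sigma A2 A3 = 0"
    and "\<not> (\<exists>B. similar3 (A1, A2, A3) B \<and> upper_tri3 B)"
  shows "\<exists>a1 d1 a2 b2 d2 a3 c3 d3 :: complex.
           similar3 (A1, A2, A3) (mat2 a1 0 0 d1, mat2 a2 b2 0 d2, mat2 a3 0 c3 d3) \<and>
           (a2 - d2) * (a3 - d3) + b2 * c3 = 0 \<and>
           (a1 - d1) * b2 * c3 \<noteq> 0"
proof -
  obtain c d where cd: "(c,d) \<noteq> (0,0)" "ff A1 c d = 0" using quad_zero_ff by blast
  obtain a b where D: "a*d - b*c \<noteq> 0" using nonzero_row[OF cd(1)] by blast
  let ?P = "mat2 a b c d"
  have inv: "invertible ?P" using matrix_inv_mat2(1)[OF D] .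
  obtain x y z where A1': "?P ** A1 ** matrix_inv ?P = mat2 x y 0 z" using upper_form[OF D cd(2)] by blast
  have NU': "NU (mat2 x y 0 z) (?P ** A2 ** matrix_inv ?P) (?P ** A3 ** matrix_inv ?P)"
    using transfer(1)[OF inv assms(4)] A1' by simp
  have sim: "similar3 (A1, A2, A3) (mat2 x y 0 z, ?P ** A2 ** matrix_inv ?P, ?P ** A3 ** matrix_inv ?P)"
    using transfer(2)[OF inv assms(4)] A1' by simp
  have "GOAL (mat2 x y 0 z) (?P ** A2 ** matrix_inv ?P) (?P ** A3 ** matrix_inv ?P)"
  proof (rule main_upper[OF NU'])
    show "sigma (mat2 x y 0 z) (?P ** A2 ** matrix_inv ?P) = 0"
      using sigma_inv[OF inv, of A1 A2] A1' assms(1) by simp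
    show "sigma (mat2 x y 0 z) (?P ** A3 ** matrix_inv ?P) = 0"
      using sigma_inv[OF inv, of A1 A3] A1' assms(2) by simp
    show "sigma (?P ** A2 ** matrix_inv ?P) (?P ** A3 ** matrix_inv ?P) = 0"
      using sigma_inv[OF inv, of A2 A3] assms(3) by simp
  qed
  then show ?thesis using similar3_trans[OF sim] by blast
qed

end
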